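(* Let $0<p<\infty$ and $\alpha>-1$. There is a constant $C=C(p,\alpha)>0$ such that for every $f$, $$\|\mathcal M_\alpha^{exp}f\|_{p,\alpha}\le C^{1/p}\|f\|_{p,\alpha}.$$
   Context: $\mathcal H=\{x+iy:x\in\mathbb R,\ y>0\}$; for $\alpha>-1$, $dV_\alpha(x+iy)=y^\alpha dx\,dy$; $\|g\|_{p,\alpha}=(\int_{\mathcal H}|g|^pdV_\alpha)^{1/p}$. For an interval $I$, $Q_I=\{x+iy:x\in I,0<y<|I|\}$, $|Q_I|_\alpha=\int_{Q_I}dV_\alpha$. The logarithmic maximal function is $\mathcal M_\alpha^{exp}f(z)=\sup\{\exp\big(\frac1{|Q_I|_\alpha}\int_{Q_I}\log|f|\,dV_\alpha\big): I\subset\mathbb R\text{ an interval with }z\in Q_I\}$. *)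

theory Defs
  imports "HOL-Analysis.Analysis"
begin

definition Hplane :: "complex set" where
  "Hplane = {z. 0 < Im z}"

definition wint :: "real \<Rightarrow> complex set \<Rightarrow> (complex \<Rightarrow> ennreal) \<Rightarrow> ennreal" where
  "wint \<alpha> S g = (\<integral>\<^sup>+ z. g z * ennreal (Im z powr \<alpha>) * indicator (S \<inter> Hplane) z \<partial>lborel)"

definition ennpow :: "ennreal \<Rightarrow> real \<Rightarrow> ennreal" where
  "ennpow x q = (if x = \<infinity> then \<infinity> else ennreal (enn2real x powr q))"

definition wnorm :: "real \<Rightarrow> real \<Rightarrow> (complex \<Rightarrow> ennreal) \<Rightarrow> ennreal" where
  "wnorm p \<alpha> G = ennpow (wint \<alpha> UNIV (\<lambda>z. ennpow (G z) p)) (1 / p)"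

definition ilen :: "real set \<Rightarrow> real" where
  "ilen I = Sup I - Inf I"

definition Qbox :: "real set \<Rightarrow> complex set" where
  "Qbox I = {z. Re z \<in> I \<and> 0 < Im z \<and> Im z < ilen I}"

definition Qmeas :: "real \<Rightarrow> real set \<Rightarrow> real" where
  "Qmeas \<alpha> I = enn2real (wint \<alpha> (Qbox I) (\<lambda>_. 1))"

text \<open>The integral of log|f| is split into its
  positive part A and negative part B (log 0 = -\<infinity>); the average is (A - B)/|Q_I|_alpha, and
  exp(-\<infinity>) = 0, exp(+\<infinity>) = \<infinity>.  (If A = B = \<infinity>, the integral is undefined; we use 0.)\<close>

definition logpos :: "('b::real_normed_vector) \<Rightarrow> ennreal" where
  "logpos w = (if w = 0 then 0 else ennreal (max 0 (ln (norm w))))"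

definition logneg :: "('b::real_normed_vector) \<Rightarrow> ennreal" where
  "logneg w = (if w = 0 then \<infinity> else ennreal (max 0 (- ln (norm w))))"

definition expavg :: "real \<Rightarrow> (complex \<Rightarrow> 'b::real_normed_vector) \<Rightarrow> real set \<Rightarrow> ennreal" where
  "expavg \<alpha> f I =
     (let A = wint \<alpha> (Qbox I) (\<lambda>z. logpos (f z));
          B = wint \<alpha> (Qbox I) (\<lambda>z. logneg (f z))
      in if B = \<infinity> then 0 else if A = \<infinity> then \<infinity>
         else ennreal (exp ((enn2real A - enn2real B) / Qmeas \<alpha> I)))"

definition Mexp :: "real \<Rightarrow> (complex \<Rightarrow> 'b::real_normed_vector) \<Rightarrow> complex \<Rightarrow> ennreal" where
  "Mexp \<alpha> f z = (SUP I \<in> {I. is_interval I \<and> bounded I \<and> z \<in> Qbox I}. expavg \<alpha> f I)"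

end

theory Submission
  imports Defs
begin

lemma Complex_measurable[measurable]:
  "(\<lambda>x. Complex (fst x) (snd x)) \<in> borel_measurable (borel \<Otimes>\<^sub>M (borel::real measure))"
proof -
  have "(\<lambda>x. Complex (fst x) (snd x)) = (\<lambda>x. complex_of_real (fst x) + \<i> * complex_of_real (snd x))"
    by (simp add: Complex_eq)
  also have "\<dots> \<in> borel_measurable (borel \<Otimes>\<^sub>M (borel::real measure))" by measurable
  finally show ?thesis .
qed

lemma Complex_measurable2[measurable]:
  "(\<lambda>(u,v). Complex u v) \<in> borel_measurable (lborel \<Otimes>\<^sub>M (lborel::real measure))"
proof -
  have "(\<lambda>x. Complex (fst x) (snd x)) \<in> borel_measurable (lborel \<Otimes>\<^sub>M (lborel::real measure))"
    by (subst measurable_cong_sets[OF sets_pair_measure_cong[OF sets_lborel sets_lborel] refl]) (rule Complex_measurable)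
  then show ?thesis by (simp add: split_beta')
qed

lemma lborel_complex_distr:
  "(lborel :: complex measure) = distr (lborel \<Otimes>\<^sub>M lborel) borel (\<lambda>(u,v). Complex u v)"
proof (rule lborel_eqI)
  fix l u :: complex
  assume le: "\<And>b. b \<in> Basis \<Longrightarrow> l \<bullet> b \<le> u \<bullet> b"
  have [measurable]: "(\<lambda>(u,v). Complex u v) \<in> borel_measurable (lborel \<Otimes>\<^sub>M (lborel::real measure))"
    by measurable
  have pre: "(\<lambda>(u,v). Complex u v) -` box l u \<inter> space (lborel \<Otimes>\<^sub>M lborel)
      = {Re l<..<Re u} \<times> {Im l<..<Im u}"
    by (auto simp: mem_box Basis_complex_def space_pair_measure)
  have "Re l \<le> Re u" "Im l \<le> Im u" using le[of 1] le[of \<i>] by (auto simp: Basis_complex_def)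
  then show "emeasure (distr (lborel \<Otimes>\<^sub>M lborel) borel (\<lambda>(u,v). Complex u v)) (box l u) = (\<Prod>b\<in>Basis. (u - l) \<bullet> b)"
    by (simp add: emeasure_distr pre lborel.emeasure_pair_measure_Times Basis_complex_def ennreal_mult)
qed simp

lemma nn_integral_complex:
  fixes g :: "complex \<Rightarrow> ennreal"
  assumes [measurable]: "g \<in> borel_measurable borel"
  shows "(\<integral>\<^sup>+z. g z \<partial>lborel) = (\<integral>\<^sup>+v. \<integral>\<^sup>+u. g (Complex u v) \<partial>lborel \<partial>lborel)"
proof -
  have "(\<integral>\<^sup>+z. g z \<partial>lborel) = (\<integral>\<^sup>+z. g z \<partial>distr (lborel \<Otimes>\<^sub>M lborel) borel (\<lambda>(u,v). Complex u v))"
    by (subst lborel_complex_distr) (rule refl)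
  also have "\<dots> = (\<integral>\<^sup>+x. g (case x of (u,v) \<Rightarrow> Complex u v) \<partial>(lborel \<Otimes>\<^sub>M lborel))"
    by (rule nn_integral_distr) (simp_all)
  also have "\<dots> = (\<integral>\<^sup>+v. \<integral>\<^sup>+u. g (Complex u v) \<partial>lborel \<partial>lborel)"
    by (subst lborel_pair.nn_integral_snd[symmetric]) (rule measurable_compose[OF Complex_measurable2], simp_all)
  finally show ?thesis .
qed

lemma tail_integral:
  fixes m a :: real
  assumes "m > 0" "a > 1"
  shows "(\<integral>\<^sup>+t. ennreal (if m \<le> t then t powr -a else 0) \<partial>lborel) = ennreal (m powr (1 - a) / (a - 1))"
proof -
  have "((\<lambda>t. t powr -a) has_integral -(m powr (-a+1)) / (-a+1)) {m..}"
    using assms by (intro has_integral_powr_to_inf) auto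
  then have "((\<lambda>t. if t \<in> {m..} then t powr -a else 0) has_integral -(m powr (-a+1)) / (-a+1)) UNIV"
    by (subst has_integral_restrict_UNIV)
  then have "((\<lambda>t. if m \<le> t then t powr -a else 0) has_integral m powr (1 - a) / (a - 1)) UNIV"
  proof -
    have "-(m powr (-a+1)) / (-a+1) = m powr (1 - a) / (a - 1)"
      using assms by (simp add: divide_simps algebra_simps)
    then show ?thesis using \<open>(_ has_integral _) UNIV\<close> by simp
  qed
  then show ?thesis
    by (subst nn_integral_has_integral_lborel[where I="m powr (1 - a) / (a - 1)"]) auto
qed

lemma head_integral:
  fixes y b :: real
  assumes "y \<ge> 0" "b > -1"
  shows "(\<integral>\<^sup>+t. ennreal (if 0 \<le> t \<and> t \<le> y then t powr b else 0) \<partial>lborel) = ennreal (y powr (b+1) / (b+1))"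
proof -
  have "((\<lambda>t. t powr b) has_integral y powr (b+1) / (b+1)) {0..y}"
    using assms by (intro has_integral_powr_from_0) auto
  then have "((\<lambda>t. if t \<in> {0..y} then t powr b else 0) has_integral y powr (b+1) / (b+1)) UNIV"
    by (subst has_integral_restrict_UNIV)
  then have "((\<lambda>t. if 0 \<le> t \<and> t \<le> y then t powr b else 0) has_integral y powr (b+1) / (b+1)) UNIV"
    by simp
  then show ?thesis
    using assms by (subst nn_integral_has_integral_lborel[where I="y powr (b+1) / (b+1)"]) auto
qed

definition gk :: "real \<Rightarrow> real \<Rightarrow> real \<Rightarrow> real" where
  "gk m a t = (if 0 \<le> t \<and> t \<le> m then m powr -a else 0) + (if m \<le> t then t powr -a else 0)"

lemma gk_measurable[measurable]: "gk m a \<in> borel_measurable borel"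
  unfolding gk_def by measurable

lemma gk_nonneg: "gk m a t \<ge> 0" unfolding gk_def by auto

lemma gk_integral:
  assumes "m > 0" "a > 1"
  shows "(\<integral>\<^sup>+t. ennreal (gk m a t) \<partial>lborel) = ennreal (m powr (1 - a) + m powr (1 - a) / (a - 1))"
proof -
  have "(\<integral>\<^sup>+t. ennreal (gk m a t) \<partial>lborel) = (\<integral>\<^sup>+t. ennreal (m powr -a) * indicator {0..m} t + ennreal (if m \<le> t then t powr -a else 0) \<partial>lborel)"
    by (intro nn_integral_cong) (auto simp: gk_def ennreal_plus[symmetric] indicator_def simp del: ennreal_plus)
  also have "\<dots> = ennreal (m powr -a) * m + ennreal (m powr (1 - a) / (a - 1))"
    using assms by (subst nn_integral_add) (auto simp: tail_integral nn_integral_cmult_indicator)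
  also have "\<dots> = ennreal (m powr (1 - a) + m powr (1 - a) / (a - 1))"
    using assms by (simp add: ennreal_mult[symmetric] ennreal_plus[symmetric] powr_diff powr_minus divide_simps del: ennreal_plus)
  finally show ?thesis .
qed

lemma kernel_u_integral:
  fixes m a x :: real
  assumes "m > 0" "a > 1"
  shows "(\<integral>\<^sup>+u. ennreal (max \<bar>x - u\<bar> m powr -a) \<partial>lborel) \<le> ennreal (2 * (m powr (1 - a) + m powr (1 - a) / (a - 1)))"
proof -
  have "(\<integral>\<^sup>+u. ennreal (max \<bar>x - u\<bar> m powr -a) \<partial>lborel) \<le> (\<integral>\<^sup>+u. ennreal (gk m a (-x + 1 * u)) + ennreal (gk m a (x + (-1) * u)) \<partial>lborel)"
  proof (intro nn_integral_mono)
    fix u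
    have "max \<bar>x - u\<bar> m powr -a \<le> gk m a (-x + 1 * u) + gk m a (x + (-1) * u)"
      using gk_nonneg[of m a "-x+1*u"] gk_nonneg[of m a "x + (-1)*u"] assms
      by (cases "\<bar>x - u\<bar> \<le> m") (auto simp: gk_def max_def abs_if split: if_splits)
    then show "ennreal (max \<bar>x - u\<bar> m powr -a) \<le> ennreal (gk m a (-x + 1 * u)) + ennreal (gk m a (x + (-1) * u))"
      by (simp add: ennreal_plus[symmetric] gk_nonneg del: ennreal_plus)
  qed
  also have "\<dots> = (\<integral>\<^sup>+u. ennreal (gk m a (-x + 1 * u)) \<partial>lborel) + (\<integral>\<^sup>+u. ennreal (gk m a (x + (-1) * u)) \<partial>lborel)"
    by (intro nn_integral_add) measurable
  also have "(\<integral>\<^sup>+u. ennreal (gk m a (-x + 1 * u)) \<partial>lborel) = (\<integral>\<^sup>+t. ennreal (gk m a t) \<partial>lborel)"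
    using nn_integral_real_affine[of "\<lambda>t. ennreal (gk m a t)" 1 "-x"] by simp
  also have "(\<integral>\<^sup>+u. ennreal (gk m a (x + (-1) * u)) \<partial>lborel) = (\<integral>\<^sup>+t. ennreal (gk m a t) \<partial>lborel)"
    using nn_integral_real_affine[of "\<lambda>t. ennreal (gk m a t)" "-1" x] by simp
  finally show ?thesis
    using assms by (simp add: gk_integral ennreal_plus[symmetric] del: ennreal_plus)
qed

definition Kf :: "real \<Rightarrow> complex \<Rightarrow> complex \<Rightarrow> real" where
  "Kf \<alpha> z w = max (max \<bar>Re z - Re w\<bar> (Im z)) (Im w) powr -(\<alpha>+2)"

lemma Kf_measurable[measurable]: "(\<lambda>x. Kf \<alpha> (fst x) (snd x)) \<in> borel_measurable (borel \<Otimes>\<^sub>M borel)"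
  unfolding Kf_def by measurable

lemma Kf_sym: "Kf \<alpha> z w = Kf \<alpha> w z"
  unfolding Kf_def by (simp add: abs_minus_commute max.commute max.left_commute max.assoc)

lemma Hplane_measurable[measurable]: "Hplane \<in> sets borel"
proof -
  have "Hplane = {z. 0 < Im z}" by (simp add: Hplane_def)
  also have "\<dots> \<in> sets borel" by measurable
  finally show ?thesis .
qed

lemma ennreal_le_cmult_plus:
  fixes c X P Q :: real
  assumes "c \<ge> 0" "P \<ge> 0" "Q \<ge> 0" "X \<le> P + Q"
  shows "ennreal (c*X) \<le> ennreal c * (ennreal P + ennreal Q)"
proof -
  have "ennreal (c*X) \<le> ennreal (c*(P+Q))"
    using assms by (intro ennreal_leI mult_left_mono) auto
  also have "\<dots> = ennreal c * ennreal (P+Q)"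
    using assms by (intro ennreal_mult'') auto
  also have "ennreal (P+Q) = ennreal P + ennreal Q"
    using assms by (intro ennreal_plus) auto
  finally show ?thesis .
qed

lemma kernel_bound:
  fixes \<alpha> :: real and z :: complex
  assumes \<alpha>: "\<alpha> > -1" and y: "Im z > 0"
  shows "(\<integral>\<^sup>+w. ennreal (Kf \<alpha> z w) * ennreal (Im w powr -((\<alpha>+1)/2)) * ennreal (Im w powr \<alpha>) * indicator Hplane w \<partial>lborel)
     \<le> ennreal (4 * (1 + 1/(\<alpha>+1)) / ((\<alpha>+1)/2) * Im z powr -((\<alpha>+1)/2))"
proof -
  define a where "a = \<alpha> + 2"
  define e where "e = (\<alpha>+1)/2"
  define b where "b = \<alpha> - e"
  define ca where "ca = 2 * (1 + 1/(a - 1))"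
  define x where "x = Re z"
  define y where "y = Im z"
  have a1: "a > 1" and e0: "e > 0" and b1: "b + 1 = e" and ab: "1 - a + b = -1 - e" "1 - a = -(\<alpha>+1)"
    using \<alpha> by (auto simp: a_def e_def b_def field_simps)
  have y0: "y > 0" using y by (simp add: y_def)
  have ca0: "ca > 0" using a1 unfolding ca_def by (intro mult_pos_pos add_pos_pos) auto
  let ?F = "\<lambda>w. ennreal (Kf \<alpha> z w) * ennreal (Im w powr -((\<alpha>+1)/2)) * ennreal (Im w powr \<alpha>) * indicator Hplane w"
  have [measurable]: "?F \<in> borel_measurable borel"
  proof -
    have "(\<lambda>w. Kf \<alpha> z w) \<in> borel_measurable borel"
      using measurable_compose[OF measurable_Pair[OF measurable_const[of z] measurable_ident_sets[OF refl]] Kf_measurable[of \<alpha>]]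
      by (simp add: borel_prod)
    then show ?thesis by measurable
  qed
  have inner: "(\<integral>\<^sup>+u. ?F (Complex u v) \<partial>lborel) \<le> ennreal (ca * (if 0 < v then max y v powr (1 - a) * v powr b else 0))" for v
  proof (cases "v > 0")
    case False
    then show ?thesis by (simp add: Hplane_def)
  next
    case True
    have "(\<integral>\<^sup>+u. ?F (Complex u v) \<partial>lborel) = (\<integral>\<^sup>+u. ennreal (v powr b) * ennreal (max \<bar>x - u\<bar> (max y v) powr -a) \<partial>lborel)"
    proof (intro nn_integral_cong)
      fix u
      have "v powr -((\<alpha>+1)/2) * v powr \<alpha> = v powr b"
        by (simp add: b_def e_def powr_add[symmetric])
      then show "?F (Complex u v) = ennreal (v powr b) * ennreal (max \<bar>x - u\<bar> (max y v) powr -a)"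
        using True by (simp add: Hplane_def Kf_def a_def x_def y_def ennreal_mult[symmetric] max.assoc mult_ac del: ennreal_mult')
    qed
    also have "\<dots> = ennreal (v powr b) * (\<integral>\<^sup>+u. ennreal (max \<bar>x - u\<bar> (max y v) powr -a) \<partial>lborel)"
      by (rule nn_integral_cmult) measurable
    also have "\<dots> \<le> ennreal (v powr b) * ennreal (2 * ((max y v) powr (1 - a) + (max y v) powr (1 - a) / (a - 1)))"
      using y0 a1 by (intro mult_left_mono kernel_u_integral) auto
    also have "\<dots> = ennreal (v powr b * (2 * ((max y v) powr (1 - a) + (max y v) powr (1 - a) / (a - 1))))"
      using a1 by (intro ennreal_mult[symmetric]) auto
    also have "\<dots> = ennreal (ca * (if 0 < v then max y v powr (1 - a) * v powr b else 0))"
      using True a1 by (simp add: ca_def field_simps)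
    finally show ?thesis .
  qed
  have "(\<integral>\<^sup>+w. ?F w \<partial>lborel) = (\<integral>\<^sup>+v. \<integral>\<^sup>+u. ?F (Complex u v) \<partial>lborel \<partial>lborel)"
    by (rule nn_integral_complex) measurable
  also have "\<dots> \<le> (\<integral>\<^sup>+v. ennreal ca * (ennreal (if 0 \<le> v \<and> v \<le> y then y powr (1-a) * v powr b else 0) + ennreal (if y \<le> v then v powr (-(1+e)) else 0)) \<partial>lborel)"
  proof (intro nn_integral_mono order.trans[OF inner])
    fix v
    have "(if 0 < v then max y v powr (1 - a) * v powr b else 0) \<le> (if 0 \<le> v \<and> v \<le> y then y powr (1-a) * v powr b else 0) + (if y \<le> v then v powr (-(1+e)) else 0)"
    proof (cases "v \<le> y")
      case True then show ?thesis by (auto simp: max_def)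
    next
      case False
      then have "max y v powr (1 - a) * v powr b = v powr (1 - a + b)"
        by (simp add: max_def powr_add)
      also have "1 - a + b = -(1+e)" using ab(1) by simp
      finally have "max y v powr (1 - a) * v powr b = v powr (-(1+e))" .
      then show ?thesis using False y0 by auto
    qed
    moreover have "0 \<le> (if 0 \<le> v \<and> v \<le> y then y powr (1-a) * v powr b else 0)" "0 \<le> (if y \<le> v then v powr (-(1+e)) else 0)"
      by auto
    ultimately show "ennreal (ca * (if 0 < v then max y v powr (1 - a) * v powr b else 0)) \<le> ennreal ca * (ennreal (if 0 \<le> v \<and> v \<le> y then y powr (1-a) * v powr b else 0) + ennreal (if y \<le> v then v powr (-(1+e)) else 0))"
      using ca0 by (intro ennreal_le_cmult_plus) auto
  qed
  also have "\<dots> = ennreal ca * ((\<integral>\<^sup>+v. ennreal (y powr (1-a)) * ennreal (if 0 \<le> v \<and> v \<le> y then v powr b else 0) \<partial>lborel) + (\<integral>\<^sup>+v. ennreal (if y \<le> v then v powr (-(1+e)) else 0) \<partial>lborel))"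
  proof -
    have "(\<integral>\<^sup>+v. ennreal (if 0 \<le> v \<and> v \<le> y then y powr (1-a) * v powr b else 0) + ennreal (if y \<le> v then v powr (-(1+e)) else 0) \<partial>lborel)
      = (\<integral>\<^sup>+v. ennreal (if 0 \<le> v \<and> v \<le> y then y powr (1-a) * v powr b else 0) \<partial>lborel) + (\<integral>\<^sup>+v. ennreal (if y \<le> v then v powr (-(1+e)) else 0) \<partial>lborel)"
      by (rule nn_integral_add) measurable
    moreover have "(\<integral>\<^sup>+v. ennreal (if 0 \<le> v \<and> v \<le> y then y powr (1-a) * v powr b else 0) \<partial>lborel) = (\<integral>\<^sup>+v. ennreal (y powr (1-a)) * ennreal (if 0 \<le> v \<and> v \<le> y then v powr b else 0) \<partial>lborel)"
      by (intro nn_integral_cong) (simp add: ennreal_mult'')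
    moreover have "(\<integral>\<^sup>+v. ennreal ca * (ennreal (if 0 \<le> v \<and> v \<le> y then y powr (1-a) * v powr b else 0) + ennreal (if y \<le> v then v powr (-(1+e)) else 0)) \<partial>lborel)
       = ennreal ca * (\<integral>\<^sup>+v. ennreal (if 0 \<le> v \<and> v \<le> y then y powr (1-a) * v powr b else 0) + ennreal (if y \<le> v then v powr (-(1+e)) else 0) \<partial>lborel)"
      by (rule nn_integral_cmult) measurable
    ultimately show ?thesis
      by (simp only:)
  qed
  also have "\<dots> = ennreal ca * (ennreal (y powr (1-a)) * ennreal (y powr (b+1) / (b+1)) + ennreal (y powr (1 - (1+e)) / ((1+e) - 1)))"
  proof -
    have "(\<integral>\<^sup>+v. ennreal (y powr (1-a)) * ennreal (if 0 \<le> v \<and> v \<le> y then v powr b else 0) \<partial>lborel) = ennreal (y powr (1-a)) * ennreal (y powr (b+1) / (b+1))"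
    proof -
      have "(\<integral>\<^sup>+v. ennreal (y powr (1-a)) * ennreal (if 0 \<le> v \<and> v \<le> y then v powr b else 0) \<partial>lborel) = ennreal (y powr (1-a)) * (\<integral>\<^sup>+v. ennreal (if 0 \<le> v \<and> v \<le> y then v powr b else 0) \<partial>lborel)"
        by (rule nn_integral_cmult) measurable
      also have "(\<integral>\<^sup>+v. ennreal (if 0 \<le> v \<and> v \<le> y then v powr b else 0) \<partial>lborel) = ennreal (y powr (b+1) / (b+1))"
        using y0 e0 b1 by (intro head_integral) auto
      finally show ?thesis .
    qed
    moreover have "(\<integral>\<^sup>+v. ennreal (if y \<le> v then v powr (-(1+e)) else 0) \<partial>lborel) = ennreal (y powr (1 - (1+e)) / ((1+e) - 1))"
      using y0 e0 by (intro tail_integral) auto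
    ultimately show ?thesis by simp
  qed
  also have "\<dots> = ennreal (ca * (y powr (-e) / e + y powr (-e) / e))"
  proof -
    have 1: "y powr (1-a) * (y powr (b+1) / (b+1)) = y powr (-e) / e"
    proof -
      have "1 - a + (b+1) = -e" using ab(1) by simp
      then have "y powr (1-a) * y powr (b+1) = y powr (-e)" by (simp add: powr_add[symmetric])
      then show ?thesis using b1 by simp
    qed
    have 2: "y powr (1 - (1+e)) / ((1+e) - 1) = y powr (-e) / e" by simp
    have "ennreal (y powr (1-a)) * ennreal (y powr (b+1) / (b+1)) = ennreal (y powr (-e) / e)"
    proof -
      have "ennreal (y powr (1-a)) * ennreal (y powr (b+1) / (b+1)) = ennreal (y powr (1-a) * (y powr (b+1) / (b+1)))"
        using e0 b1 by (intro ennreal_mult''[symmetric]) simp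
      then show ?thesis by (simp only: 1)
    qed
    moreover have "ennreal (y powr (-e) / e) + ennreal (y powr (-e) / e) = ennreal (y powr (-e) / e + y powr (-e) / e)"
      using e0 by (intro ennreal_plus[symmetric]) auto
    moreover have "ennreal ca * ennreal (y powr (-e) / e + y powr (-e) / e) = ennreal (ca * (y powr (-e) / e + y powr (-e) / e))"
      using e0 by (intro ennreal_mult''[symmetric]) auto
    ultimately show ?thesis
      by (simp only: 2)
  qed
  also have "ca * (y powr (-e) / e + y powr (-e) / e) = 4 * (1 + 1/(\<alpha>+1)) / ((\<alpha>+1)/2) * Im z powr -((\<alpha>+1)/2)"
    by (simp add: ca_def a_def e_def y_def)
  finally show ?thesis .
qed

definition Top :: "real \<Rightarrow> (complex \<Rightarrow> ennreal) \<Rightarrow> complex \<Rightarrow> ennreal" where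
  "Top \<alpha> h z = (\<integral>\<^sup>+w. ennreal (Kf \<alpha> z w) * h w * ennreal (Im w powr \<alpha>) * indicator Hplane w \<partial>lborel)"

lemma Kf_nonneg: "Kf \<alpha> z w \<ge> 0" by (simp add: Kf_def)

lemma Kf_measurable'[measurable]: "(\<lambda>x. Kf \<alpha> (fst x) (snd x)) \<in> borel_measurable (lborel \<Otimes>\<^sub>M lborel)"
  by (subst measurable_cong_sets[OF sets_pair_measure_cong[OF sets_lborel sets_lborel] refl]) (rule Kf_measurable)

lemma Kf_measurable1[measurable]: "(\<lambda>w. Kf \<alpha> z w) \<in> borel_measurable borel"
  using measurable_compose[OF measurable_Pair[OF measurable_const[of z] measurable_ident_sets[OF refl]] Kf_measurable[of \<alpha>]]
  by (simp add: borel_prod)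

lemma ennreal_sqrt_sq: "x \<ge> 0 \<Longrightarrow> ennreal (sqrt x) ^ 2 = ennreal x"
  by (subst ennreal_power) auto

lemma CS_step:
  fixes \<alpha> :: real and z :: complex and h :: "complex \<Rightarrow> ennreal"
  assumes h[measurable]: "h \<in> borel_measurable borel"
  defines "e \<equiv> (\<alpha>+1)/2"
  shows "(Top \<alpha> h z)\<^sup>2 \<le> (\<integral>\<^sup>+w. ennreal (Kf \<alpha> z w) * ennreal (Im w powr -((\<alpha>+1)/2)) * ennreal (Im w powr \<alpha>) * indicator Hplane w \<partial>lborel)
     * (\<integral>\<^sup>+w. ennreal (Kf \<alpha> z w) * ennreal (Im w powr e) * (h w)\<^sup>2 * ennreal (Im w powr \<alpha>) * indicator Hplane w \<partial>lborel)"
proof -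
  define F where "F w = ennreal (sqrt (Kf \<alpha> z w * Im w powr \<alpha> * Im w powr -e)) * indicator Hplane w" for w
  define G where "G w = ennreal (sqrt (Kf \<alpha> z w * Im w powr \<alpha> * Im w powr e)) * h w * indicator Hplane w" for w
  have [measurable]: "F \<in> borel_measurable borel" "G \<in> borel_measurable borel"
    unfolding F_def G_def by measurable
  have "Top \<alpha> h z = (\<integral>\<^sup>+w. F w * G w \<partial>lborel)"
    unfolding Top_def
  proof (intro nn_integral_cong)
    fix w
    show "ennreal (Kf \<alpha> z w) * h w * ennreal (Im w powr \<alpha>) * indicator Hplane w = F w * G w"
    proof (cases "w \<in> Hplane")
      case True
      then have w: "Im w > 0" by (simp add: Hplane_def)
      have "sqrt (Kf \<alpha> z w * Im w powr \<alpha> * Im w powr -e) * sqrt (Kf \<alpha> z w * Im w powr \<alpha> * Im w powr e)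
          = sqrt ((Kf \<alpha> z w * Im w powr \<alpha>)^2 * (Im w powr -e * Im w powr e))"
        by (simp add: real_sqrt_mult[symmetric] power2_eq_square mult_ac)
      also have "Im w powr -e * Im w powr e = 1" using w by (simp add: powr_add[symmetric])
      finally have "sqrt (Kf \<alpha> z w * Im w powr \<alpha> * Im w powr -e) * sqrt (Kf \<alpha> z w * Im w powr \<alpha> * Im w powr e) = Kf \<alpha> z w * Im w powr \<alpha>"
        using Kf_nonneg[of \<alpha> z w] by simp
      then have "ennreal (sqrt (Kf \<alpha> z w * Im w powr \<alpha> * Im w powr -e)) * ennreal (sqrt (Kf \<alpha> z w * Im w powr \<alpha> * Im w powr e)) = ennreal (Kf \<alpha> z w) * ennreal (Im w powr \<alpha>)"
        using Kf_nonneg[of \<alpha> z w] by (simp add: ennreal_mult[symmetric])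
      then show ?thesis using True unfolding F_def G_def
        by (simp add: mult_ac)
    qed (simp add: F_def G_def)
  qed
  then have "(Top \<alpha> h z)\<^sup>2 \<le> (\<integral>\<^sup>+w. F w ^ 2 \<partial>lborel) * (\<integral>\<^sup>+w. G w ^ 2 \<partial>lborel)"
    by (simp add: Cauchy_Schwarz_nn_integral)
  also have "(\<integral>\<^sup>+w. F w ^ 2 \<partial>lborel) = (\<integral>\<^sup>+w. ennreal (Kf \<alpha> z w) * ennreal (Im w powr -((\<alpha>+1)/2)) * ennreal (Im w powr \<alpha>) * indicator Hplane w \<partial>lborel)"
  proof (intro nn_integral_cong)
    fix w
    have "F w ^ 2 = ennreal (Kf \<alpha> z w * Im w powr \<alpha> * Im w powr -e) * indicator Hplane w"
      using Kf_nonneg[of \<alpha> z w] unfolding F_def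
      by (simp add: power_mult_distrib ennreal_sqrt_sq indicator_def)
    then show "F w ^ 2 = ennreal (Kf \<alpha> z w) * ennreal (Im w powr -((\<alpha>+1)/2)) * ennreal (Im w powr \<alpha>) * indicator Hplane w"
      using Kf_nonneg[of \<alpha> z w] by (simp add: e_def ennreal_mult mult_ac)
  qed
  also have "(\<integral>\<^sup>+w. G w ^ 2 \<partial>lborel) = (\<integral>\<^sup>+w. ennreal (Kf \<alpha> z w) * ennreal (Im w powr e) * (h w)\<^sup>2 * ennreal (Im w powr \<alpha>) * indicator Hplane w \<partial>lborel)"
  proof (intro nn_integral_cong)
    fix w
    have "G w ^ 2 = ennreal (Kf \<alpha> z w * Im w powr \<alpha> * Im w powr e) * (h w)\<^sup>2 * indicator Hplane w"
      using Kf_nonneg[of \<alpha> z w] unfolding G_def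
      by (simp add: power_mult_distrib ennreal_sqrt_sq indicator_def)
    then show "G w ^ 2 = ennreal (Kf \<alpha> z w) * ennreal (Im w powr e) * (h w)\<^sup>2 * ennreal (Im w powr \<alpha>) * indicator Hplane w"
      using Kf_nonneg[of \<alpha> z w] by (simp add: ennreal_mult mult_ac)
  qed
  finally show ?thesis .
qed

definition Ck :: "real \<Rightarrow> real" where "Ck \<alpha> = 4 * (1 + 1/(\<alpha>+1)) / ((\<alpha>+1)/2)"

lemma Ck_pos: "\<alpha> > -1 \<Longrightarrow> Ck \<alpha> > 0"
proof -
  assume a: "\<alpha> > -1"
  then have "1/(\<alpha>+1) > 0" by simp
  then have "1 + 1/(\<alpha>+1) > 0" by linarith
  then show ?thesis using a unfolding Ck_def by (intro divide_pos_pos mult_pos_pos) auto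
qed

lemma schur:
  fixes \<alpha> :: real and h :: "complex \<Rightarrow> ennreal"
  assumes \<alpha>: "\<alpha> > -1" and h[measurable]: "h \<in> borel_measurable borel"
  shows "(\<integral>\<^sup>+z. (Top \<alpha> h z)\<^sup>2 * ennreal (Im z powr \<alpha>) * indicator Hplane z \<partial>lborel)
     \<le> ennreal ((Ck \<alpha>)\<^sup>2) * (\<integral>\<^sup>+w. (h w)\<^sup>2 * ennreal (Im w powr \<alpha>) * indicator Hplane w \<partial>lborel)"
proof -
  define e where "e = (\<alpha>+1)/2"
  define B where "B z = (\<integral>\<^sup>+w. ennreal (Kf \<alpha> z w) * ennreal (Im w powr e) * (h w)\<^sup>2 * ennreal (Im w powr \<alpha>) * indicator Hplane w \<partial>lborel)" for z
  define \<Phi> where "\<Phi> z w = ennreal (Im z powr -e) * ennreal (Im z powr \<alpha>) * indicator Hplane z *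
      (ennreal (Kf \<alpha> z w) * ennreal (Im w powr e) * (h w)\<^sup>2 * ennreal (Im w powr \<alpha>) * indicator Hplane w)" for z w
  have C0: "Ck \<alpha> > 0" using Ck_pos[OF \<alpha>] .
  have [measurable]: "case_prod \<Phi> \<in> borel_measurable (lborel \<Otimes>\<^sub>M lborel)"
    unfolding \<Phi>_def split_beta' by measurable
  have step1: "(Top \<alpha> h z)\<^sup>2 * ennreal (Im z powr \<alpha>) * indicator Hplane z \<le> ennreal (Ck \<alpha>) * (\<integral>\<^sup>+w. \<Phi> z w \<partial>lborel)" for z
  proof (cases "z \<in> Hplane")
    case False then show ?thesis by (simp add: \<Phi>_def)
  next
    case True
    then have y: "Im z > 0" by (simp add: Hplane_def)
    have "(Top \<alpha> h z)\<^sup>2 \<le> ennreal (Ck \<alpha> * Im z powr -((\<alpha>+1)/2)) * B z"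
      unfolding B_def e_def
      by (rule order.trans[OF CS_step[OF h]], rule mult_right_mono, unfold Ck_def, rule kernel_bound[OF \<alpha> y]) simp
    then have "(Top \<alpha> h z)\<^sup>2 * ennreal (Im z powr \<alpha>) * indicator Hplane z \<le> ennreal (Ck \<alpha> * Im z powr -((\<alpha>+1)/2)) * B z * ennreal (Im z powr \<alpha>) * indicator Hplane z"
      by (intro mult_right_mono) auto
    also have "\<dots> = ennreal (Ck \<alpha>) * ((ennreal (Im z powr -e) * ennreal (Im z powr \<alpha>) * indicator Hplane z) * B z)"
      using C0 by (simp add: ennreal_mult e_def mult_ac)
    also have "(ennreal (Im z powr -e) * ennreal (Im z powr \<alpha>) * indicator Hplane z) * B z = (\<integral>\<^sup>+w. \<Phi> z w \<partial>lborel)"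
      unfolding B_def \<Phi>_def by (rule nn_integral_cmult[symmetric]) measurable
    finally show ?thesis .
  qed
  have step2: "(\<integral>\<^sup>+z. \<Phi> z w \<partial>lborel) \<le> ennreal (Ck \<alpha>) * ((h w)\<^sup>2 * ennreal (Im w powr \<alpha>) * indicator Hplane w)" for w
  proof (cases "w \<in> Hplane")
    case False then show ?thesis by (simp add: \<Phi>_def)
  next
    case True
    then have y: "Im w > 0" by (simp add: Hplane_def)
    have "(\<integral>\<^sup>+z. \<Phi> z w \<partial>lborel) = (ennreal (Im w powr e) * (h w)\<^sup>2 * ennreal (Im w powr \<alpha>) * indicator Hplane w) *
       (\<integral>\<^sup>+z. ennreal (Kf \<alpha> w z) * ennreal (Im z powr -((\<alpha>+1)/2)) * ennreal (Im z powr \<alpha>) * indicator Hplane z \<partial>lborel)"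
      by (subst nn_integral_cmult[symmetric]) (measurable, auto intro!: nn_integral_cong simp: \<Phi>_def Kf_sym[of \<alpha> w] e_def mult_ac)
    also have "\<dots> \<le> (ennreal (Im w powr e) * (h w)\<^sup>2 * ennreal (Im w powr \<alpha>) * indicator Hplane w) * ennreal (Ck \<alpha> * Im w powr -((\<alpha>+1)/2))"
      unfolding Ck_def by (intro mult_left_mono kernel_bound[OF \<alpha> y]) simp
    also have "\<dots> = ennreal (Ck \<alpha>) * ((h w)\<^sup>2 * ennreal (Im w powr \<alpha>) * indicator Hplane w) * ennreal (Im w powr e * Im w powr -e)"
      using C0 by (simp add: ennreal_mult e_def mult_ac)
    also have "Im w powr e * Im w powr -e = 1" using y by (simp add: powr_add[symmetric])
    finally show ?thesis by simp
  qed
  have "(\<integral>\<^sup>+z. (Top \<alpha> h z)\<^sup>2 * ennreal (Im z powr \<alpha>) * indicator Hplane z \<partial>lborel) \<le> (\<integral>\<^sup>+z. ennreal (Ck \<alpha>) * (\<integral>\<^sup>+w. \<Phi> z w \<partial>lborel) \<partial>lborel)"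
    by (intro nn_integral_mono step1)
  also have "\<dots> = ennreal (Ck \<alpha>) * (\<integral>\<^sup>+z. \<integral>\<^sup>+w. \<Phi> z w \<partial>lborel \<partial>lborel)"
    by (rule nn_integral_cmult) measurable
  also have "(\<integral>\<^sup>+z. \<integral>\<^sup>+w. \<Phi> z w \<partial>lborel \<partial>lborel) = (\<integral>\<^sup>+w. \<integral>\<^sup>+z. \<Phi> z w \<partial>lborel \<partial>lborel)"
    by (rule lborel_pair.Fubini'[symmetric]) measurable
  also have "\<dots> \<le> (\<integral>\<^sup>+w. ennreal (Ck \<alpha>) * ((h w)\<^sup>2 * ennreal (Im w powr \<alpha>) * indicator Hplane w) \<partial>lborel)"
    by (intro nn_integral_mono step2)
  also have "\<dots> = ennreal (Ck \<alpha>) * (\<integral>\<^sup>+w. (h w)\<^sup>2 * ennreal (Im w powr \<alpha>) * indicator Hplane w \<partial>lborel)"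
    by (rule nn_integral_cmult) measurable
  finally show ?thesis
    using C0 by (simp add: power2_eq_square ennreal_mult mult.assoc mult_left_mono)
qed

lemma ivl_facts:
  fixes I :: "real set"
  assumes iv: "is_interval I" and bd: "bounded I" and ne: "I \<noteq> {}"
  shows "\<And>t. t \<in> I \<Longrightarrow> Inf I \<le> t \<and> t \<le> Sup I"
    and "{Inf I<..<Sup I} \<subseteq> I"
    and "I \<in> sets borel"
    and "emeasure lborel I = ennreal (ilen I)"
    and "ilen I \<ge> 0"
proof -
  have ba: "bdd_above I" and bb: "bdd_below I"
    using bd by (auto intro: bounded_imp_bdd_above bounded_imp_bdd_below)
  show mem: "Inf I \<le> t \<and> t \<le> Sup I" if "t \<in> I" for t
    using that ba bb by (auto intro: cInf_lower cSup_upper)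
  show sub: "{Inf I<..<Sup I} \<subseteq> I"
  proof
    fix t assume "t \<in> {Inf I<..<Sup I}"
    then have "Inf I < t" "t < Sup I" by auto
    then obtain a b where "a \<in> I" "a < t" "b \<in> I" "t < b"
      using ne ba bb by (meson cInf_less_iff less_cSup_iff)
    then show "t \<in> I" using iv unfolding is_interval_1 by (meson less_imp_le)
  qed
  have eq: "I = {Inf I<..<Sup I} \<union> (I \<inter> {Inf I, Sup I})"
    using sub mem by fastforce
  have "{Inf I<..<Sup I} \<union> (I \<inter> {Inf I, Sup I}) \<in> sets borel"
  proof -
    have "finite (I \<inter> {Inf I, Sup I})" by auto
    then have "I \<inter> {Inf I, Sup I} \<in> sets borel" by (intro borel_closed finite_imp_closed)
    then show ?thesis by auto
  qed
  then show Ib: "I \<in> sets borel" using eq by simp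
  have le: "Inf I \<le> Sup I" using ne mem by force
  then show "ilen I \<ge> 0" by (simp add: ilen_def)
  have "emeasure lborel I \<le> emeasure lborel {Inf I..Sup I}"
    using mem Ib by (intro emeasure_mono) auto
  moreover have "emeasure lborel {Inf I<..<Sup I} \<le> emeasure lborel I"
    using sub Ib by (intro emeasure_mono) auto
  ultimately show "emeasure lborel I = ennreal (ilen I)"
    using le by (simp add: ilen_def)
qed

lemma Qbox_sets[measurable]:
  assumes "I \<in> sets borel"
  shows "Qbox I \<in> sets borel"
proof -
  have [measurable]: "I \<in> sets borel" by fact
  have "Qbox I = {z. Re z \<in> I \<and> 0 < Im z \<and> Im z < ilen I}" by (simp add: Qbox_def)
  also have "\<dots> \<in> sets borel" by measurable
  finally show ?thesis .
qed

lemma Qbox_facts: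
  fixes I :: "real set" and z :: complex and \<alpha> :: real
  assumes iv: "is_interval I" and bd: "bounded I" and zQ: "z \<in> Qbox I" and \<alpha>: "\<alpha> > -1"
  shows "ilen I > 0" and "I \<in> sets borel" and "Qbox I \<in> sets borel" and "Qbox I \<subseteq> Hplane"
    and "wint \<alpha> (Qbox I) (\<lambda>_. 1) = ennreal (ilen I powr (\<alpha>+2) / (\<alpha>+1))"
    and "Qmeas \<alpha> I = ilen I powr (\<alpha>+2) / (\<alpha>+1)"
    and "\<And>w. w \<in> Qbox I \<Longrightarrow> 1 \<le> ilen I powr (\<alpha>+2) * Kf \<alpha> z w"
proof -
  define L where "L = ilen I"
  have ne: "I \<noteq> {}" using zQ by (auto simp: Qbox_def)
  note F = ivl_facts[OF iv bd ne]
  show L0: "ilen I > 0" using zQ by (simp add: Qbox_def)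
  show Ib[measurable]: "I \<in> sets borel" by (rule F(3))
  show [measurable]: "Qbox I \<in> sets borel" by (rule Qbox_sets[OF Ib])
  show QH: "Qbox I \<subseteq> Hplane" by (auto simp: Qbox_def Hplane_def)
  show wQ: "wint \<alpha> (Qbox I) (\<lambda>_. 1) = ennreal (ilen I powr (\<alpha>+2) / (\<alpha>+1))"
  proof -
    have "wint \<alpha> (Qbox I) (\<lambda>_. 1) = (\<integral>\<^sup>+w. ennreal (Im w powr \<alpha>) * indicator (Qbox I) w \<partial>lborel)"
      unfolding wint_def using QH by (intro nn_integral_cong) (auto simp: Int_absorb2)
    also have "\<dots> = (\<integral>\<^sup>+v. \<integral>\<^sup>+u. ennreal (Im (Complex u v) powr \<alpha>) * indicator (Qbox I) (Complex u v) \<partial>lborel \<partial>lborel)"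
      by (rule nn_integral_complex) measurable
    also have "\<dots> = (\<integral>\<^sup>+v. (ennreal (v powr \<alpha>) * indicator {0<..<L} v) * (\<integral>\<^sup>+u. indicator I u \<partial>lborel) \<partial>lborel)"
      by (intro nn_integral_cong, subst nn_integral_cmult[symmetric], measurable)
         (auto intro!: nn_integral_cong simp: Qbox_def L_def indicator_def)
    also have "\<dots> = (\<integral>\<^sup>+v. ennreal L * ennreal (if 0 \<le> v \<and> v \<le> L then v powr \<alpha> else 0) \<partial>lborel)"
    proof -
      have hI: "(\<integral>\<^sup>+u. indicator I u \<partial>lborel) = ennreal L"
        using F(4) Ib by (simp add: L_def)
      show ?thesis
        by (intro nn_integral_cong_AE eventually_mono[OF AE_lborel_singleton[of L]])
           (simp only: hI, auto simp: L_def mult_ac split: split_indicator)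
    qed
    also have "\<dots> = ennreal L * ennreal (L powr (\<alpha>+1) / (\<alpha>+1))"
      using F(5) \<alpha> by (subst nn_integral_cmult) (measurable, simp add: head_integral L_def)
    also have "\<dots> = ennreal (ilen I powr (\<alpha>+2) / (\<alpha>+1))"
    proof -
      have "L * (L powr (\<alpha>+1) / (\<alpha>+1)) = ilen I powr (\<alpha>+2) / (\<alpha>+1)"
      proof -
        have "L powr (1 + (\<alpha>+1)) = L powr 1 * L powr (\<alpha>+1)" by (rule powr_add)
        moreover have "1 + (\<alpha>+1) = \<alpha>+2" by simp
        ultimately have "L powr (\<alpha>+2) = L * L powr (\<alpha>+1)" using L0 by (simp add: L_def)
        then show ?thesis by (simp add: L_def)
      qed
      then show ?thesis using L0 \<alpha> by (simp add: ennreal_mult[symmetric] L_def)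
    qed
    finally show ?thesis .
  qed
  show "Qmeas \<alpha> I = ilen I powr (\<alpha>+2) / (\<alpha>+1)"
    using wQ \<alpha> by (simp add: Qmeas_def)
  show "1 \<le> ilen I powr (\<alpha>+2) * Kf \<alpha> z w" if wQ: "w \<in> Qbox I" for w
  proof -
    define M where "M = max (max \<bar>Re z - Re w\<bar> (Im z)) (Im w)"
    have "Re z \<in> I" "Re w \<in> I" using zQ wQ by (auto simp: Qbox_def)
    then have "Inf I \<le> Re z \<and> Re z \<le> Sup I" "Inf I \<le> Re w \<and> Re w \<le> Sup I" using F(1) by auto
    then have "\<bar>Re z - Re w\<bar> \<le> L" by (simp add: L_def ilen_def abs_le_iff)
    then have hM: "M \<le> L" "M > 0" using zQ wQ by (auto simp: M_def L_def Qbox_def)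
    have "L powr -(\<alpha>+2) \<le> M powr -(\<alpha>+2)"
      using hM \<alpha> by (intro powr_mono2') auto
    then have "L powr (\<alpha>+2) * L powr -(\<alpha>+2) \<le> L powr (\<alpha>+2) * Kf \<alpha> z w"
      unfolding Kf_def M_def[symmetric] by (intro mult_left_mono) auto
    moreover have "L powr (\<alpha>+2) * L powr -(\<alpha>+2) = 1"
      using L0 by (simp add: L_def powr_add[symmetric])
    ultimately show ?thesis by (simp add: L_def)
  qed
qed

lemma wint_add:
  assumes [measurable]: "S \<in> sets borel" "g1 \<in> borel_measurable borel" "g2 \<in> borel_measurable borel"
  shows "wint \<alpha> S (\<lambda>w. g1 w + g2 w) = wint \<alpha> S g1 + wint \<alpha> S g2"
  unfolding wint_def by (subst nn_integral_add[symmetric]) (measurable, auto intro!: nn_integral_cong simp: distrib_right)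

lemma wint_cmult:
  assumes [measurable]: "S \<in> sets borel" "g \<in> borel_measurable borel"
  shows "wint \<alpha> S (\<lambda>w. c * g w) = c * wint \<alpha> S g"
  unfolding wint_def by (subst nn_integral_cmult[symmetric]) (measurable, auto intro!: nn_integral_cong simp: mult_ac)

lemma wint_const:
  assumes [measurable]: "S \<in> sets borel"
  shows "wint \<alpha> S (\<lambda>w. c) = c * wint \<alpha> S (\<lambda>_. 1)"
  using wint_cmult[OF assms, of "\<lambda>_. 1" \<alpha> c] by simp

lemma wint_mono: "(\<And>w. g1 w \<le> g2 w) \<Longrightarrow> wint \<alpha> S g1 \<le> wint \<alpha> S g2"
  unfolding wint_def by (intro nn_integral_mono mult_right_mono) auto

lemma wint_le_Top:
  fixes I :: "real set" and z :: complex and \<alpha> :: real and g :: "complex \<Rightarrow> ennreal"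
  assumes iv: "is_interval I" and bd: "bounded I" and zQ: "z \<in> Qbox I" and \<alpha>: "\<alpha> > -1"
    and g[measurable]: "g \<in> borel_measurable borel"
  shows "wint \<alpha> (Qbox I) g \<le> ennreal (ilen I powr (\<alpha>+2)) * Top \<alpha> g z"
proof -
  note F = Qbox_facts[OF iv bd zQ \<alpha>]
  have "wint \<alpha> (Qbox I) g \<le> (\<integral>\<^sup>+w. ennreal (ilen I powr (\<alpha>+2)) * (ennreal (Kf \<alpha> z w) * g w * ennreal (Im w powr \<alpha>) * indicator Hplane w) \<partial>lborel)"
    unfolding wint_def
  proof (intro nn_integral_mono)
    fix w
    show "g w * ennreal (Im w powr \<alpha>) * indicator (Qbox I \<inter> Hplane) w \<le> ennreal (ilen I powr (\<alpha>+2)) * (ennreal (Kf \<alpha> z w) * g w * ennreal (Im w powr \<alpha>) * indicator Hplane w)"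
    proof (cases "w \<in> Qbox I")
      case True
      then have "1 \<le> ilen I powr (\<alpha>+2) * Kf \<alpha> z w" by (rule F(7))
      then have "1 \<le> ennreal (ilen I powr (\<alpha>+2)) * ennreal (Kf \<alpha> z w)"
        by (simp add: ennreal_mult[symmetric] Kf_nonneg del: ennreal_mult')
      then have "g w * ennreal (Im w powr \<alpha>) * 1 \<le> g w * ennreal (Im w powr \<alpha>) * (ennreal (ilen I powr (\<alpha>+2)) * ennreal (Kf \<alpha> z w))"
        by (intro mult_left_mono) auto
      then show ?thesis using True F(4) by (auto simp: mult_ac)
    qed simp
  qed
  also have "\<dots> = ennreal (ilen I powr (\<alpha>+2)) * Top \<alpha> g z"
    unfolding Top_def by (rule nn_integral_cmult) measurable
  finally show ?thesis .
qed

lemma logpos_eq: "logpos w = ennreal (max 0 (ln (norm w)))"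
  by (simp add: logpos_def)

lemma logneg_eq: "logneg w = (if w = 0 then \<infinity> else ennreal (max 0 (- ln (norm w))))"
  by (simp add: logneg_def)

lemma logpos_meas[measurable]:
  fixes f :: "complex \<Rightarrow> complex"
  assumes [measurable]: "f \<in> borel_measurable borel"
  shows "(\<lambda>w. logpos (f w)) \<in> borel_measurable borel"
  unfolding logpos_eq by measurable

lemma logneg_meas[measurable]:
  fixes f :: "complex \<Rightarrow> complex"
  assumes [measurable]: "f \<in> borel_measurable borel"
  shows "(\<lambda>w. logneg (f w)) \<in> borel_measurable borel"
  unfolding logneg_eq by measurable

lemma ln_le_powr: "(t::real) > 0 \<Longrightarrow> s > 0 \<Longrightarrow> s * max 0 (ln t) \<le> t powr s"
proof -
  assume t: "t > 0" and s: "s > 0"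
  have "s * ln t = ln (t powr s)" by simp
  also have "\<dots> \<le> t powr s - 1" using t by (intro ln_le_minus_one) auto
  finally show ?thesis using t by (auto simp: max_def)
qed

lemma pointwise_jensen:
  fixes d s :: real and w :: complex
  assumes s: "s > 0"
  shows "ennreal (exp d) * (1 + ennreal s * logpos w + ennreal (max 0 (-d)))
     \<le> ennreal (norm w powr s) + ennreal (exp d) * (ennreal s * logneg w + ennreal (max 0 d))"
proof (cases "w = 0")
  case True then show ?thesis using s by (simp add: logneg_def ennreal_mult_top)
next
  case False
  define l where "l = ln (norm w)"
  have nw: "norm w > 0" using False by simp
  have e: "exp (s * l) = norm w powr s" using nw by (simp add: l_def powr_def)
  have key: "exp d * (1 + (s * l - d)) \<le> exp (s * l)"
  proof -
    have "1 + (s * l - d) \<le> exp (s * l - d)" by (rule exp_ge_add_one_self)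
    then have "exp d * (1 + (s * l - d)) \<le> exp d * exp (s * l - d)" by (intro mult_left_mono) auto
    also have "exp d * exp (s * l - d) = exp (s * l)" by (simp add: exp_add[symmetric])
    finally show ?thesis .
  qed
  have real: "exp d * (1 + s * max 0 l + max 0 (-d)) \<le> norm w powr s + exp d * (s * max 0 (-l) + max 0 d)"
  proof -
    have "s * max 0 l - s * max 0 (-l) = s * l" by (simp add: max_def right_diff_distrib[symmetric])
    moreover have "max 0 (-d) - max 0 d = -d" by (simp add: max_def)
    moreover have "exp d * (1 + s * max 0 l + max 0 (-d)) - exp d * (s * max 0 (-l) + max 0 d) = exp d * (1 + (s * max 0 l - s * max 0 (-l)) + (max 0 (-d) - max 0 d))"
      by (simp add: algebra_simps)
    ultimately have "exp d * (1 + s * max 0 l + max 0 (-d)) - exp d * (s * max 0 (-l) + max 0 d) = exp d * (1 + (s * l - d))"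
      by simp
    then show ?thesis using key e by linarith
  qed
  have nn: "0 \<le> s * max 0 l" "0 \<le> max 0 (-d)" "0 \<le> s * max 0 (-l)" "0 \<le> max 0 d" "0 \<le> exp d"
    using s by auto
  have "ennreal (exp d) * (1 + ennreal s * logpos w + ennreal (max 0 (-d))) = ennreal (exp d * (1 + s * max 0 l + max 0 (-d)))"
    using nn s by (simp add: logpos_eq l_def ennreal_mult ennreal_plus)
  also have "\<dots> \<le> ennreal (norm w powr s + exp d * (s * max 0 (-l) + max 0 d))"
    using real by (rule ennreal_leI)
  also have "\<dots> = ennreal (norm w powr s) + ennreal (exp d) * (ennreal s * logneg w + ennreal (max 0 d))"
    using nn s False by (simp add: logneg_eq l_def ennreal_mult ennreal_plus)
  finally show ?thesis .
qed

lemma jensen_box: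
  fixes f :: "complex \<Rightarrow> complex" and I :: "real set" and z :: complex and \<alpha> s :: real
  assumes f[measurable]: "f \<in> borel_measurable borel" and s: "s > 0"
    and iv: "is_interval I" and bd: "bounded I" and zQ: "z \<in> Qbox I" and \<alpha>: "\<alpha> > -1"
  shows "ennpow (expavg \<alpha> f I) s * ennreal (Qmeas \<alpha> I) \<le> wint \<alpha> (Qbox I) (\<lambda>w. ennreal (norm (f w) powr s))"
proof -
  note F = Qbox_facts[OF iv bd zQ \<alpha>]
  define m where "m = Qmeas \<alpha> I"
  define A where "A = wint \<alpha> (Qbox I) (\<lambda>z. logpos (f z))"
  define B where "B = wint \<alpha> (Qbox I) (\<lambda>z. logneg (f z))"
  define E where "E = wint \<alpha> (Qbox I) (\<lambda>w. ennreal (norm (f w) powr s))"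
  have [measurable]: "Qbox I \<in> sets borel" by (rule F(3))
  have m0: "m > 0" using F(1,6) \<alpha> by (simp add: m_def)
  have W1: "wint \<alpha> (Qbox I) (\<lambda>_. 1) = ennreal m" using F(5,6) by (simp add: m_def)
  have EA: "ennreal s * A \<le> E"
  proof -
    have "ennreal s * A = wint \<alpha> (Qbox I) (\<lambda>w. ennreal s * logpos (f w))"
      unfolding A_def by (rule wint_cmult[symmetric]) measurable
    also have "\<dots> \<le> E" unfolding E_def
    proof (rule wint_mono)
      fix w
      show "ennreal s * logpos (f w) \<le> ennreal (norm (f w) powr s)"
      proof (cases "f w = 0")
        case True then show ?thesis by (simp add: logpos_def)
      next
        case False
        then have "s * max 0 (ln (norm (f w))) \<le> norm (f w) powr s" using s by (intro ln_le_powr) auto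
        then show ?thesis using s by (simp add: logpos_eq ennreal_mult[symmetric] ennreal_leI del: ennreal_mult')
      qed
    qed
    finally show ?thesis .
  qed
  show ?thesis
  proof (cases "B = \<infinity>")
    case True
    then have "expavg \<alpha> f I = 0" by (simp add: expavg_def A_def B_def Let_def)
    then show ?thesis using s by (simp add: ennpow_def)
  next
    case Bfin: False
    show ?thesis
    proof (cases "A = \<infinity>")
      case True
      then have "expavg \<alpha> f I = \<infinity>" using Bfin by (simp add: expavg_def A_def B_def Let_def)
      moreover have "E = \<infinity>" using EA True s by (simp add: ennreal_mult_top top_unique)
      ultimately show ?thesis by (simp add: E_def ennpow_def)
    next
      case Afin: False
      obtain P where P: "A = ennreal P" "P \<ge> 0" using Afin by (cases A) auto
      obtain N where N: "B = ennreal N" "N \<ge> 0" using Bfin by (cases B) auto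
      define c where "c = (P - N) / m"
      define d where "d = s * c"
      have ea: "expavg \<alpha> f I = ennreal (exp c)"
        using Afin Bfin P N by (simp add: expavg_def A_def[symmetric] B_def[symmetric] Let_def c_def m_def)
      have ep: "ennpow (expavg \<alpha> f I) s = ennreal (exp d)"
        by (simp add: ea ennpow_def d_def powr_def)
      have "wint \<alpha> (Qbox I) (\<lambda>w. ennreal (exp d) * (1 + ennreal s * logpos (f w) + ennreal (max 0 (-d))))
         \<le> wint \<alpha> (Qbox I) (\<lambda>w. ennreal (norm (f w) powr s) + ennreal (exp d) * (ennreal s * logneg (f w) + ennreal (max 0 d)))"
        by (rule wint_mono, rule pointwise_jensen[OF s])
      also have "wint \<alpha> (Qbox I) (\<lambda>w. ennreal (exp d) * (1 + ennreal s * logpos (f w) + ennreal (max 0 (-d))))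
         = ennreal (exp d) * (ennreal m + ennreal s * A + ennreal (max 0 (-d)) * ennreal m)"
        by (simp add: wint_cmult wint_add wint_const W1 A_def)
      also have "wint \<alpha> (Qbox I) (\<lambda>w. ennreal (norm (f w) powr s) + ennreal (exp d) * (ennreal s * logneg (f w) + ennreal (max 0 d)))
         = E + ennreal (exp d) * (ennreal s * B + ennreal (max 0 d) * ennreal m)"
        by (simp add: wint_cmult wint_add wint_const W1 B_def E_def)
      finally have ineq: "ennreal (exp d) * (ennreal m + ennreal s * A + ennreal (max 0 (-d)) * ennreal m) \<le> E + ennreal (exp d) * (ennreal s * B + ennreal (max 0 d) * ennreal m)" .
      show ?thesis
      proof (cases "E = \<infinity>")
        case True then show ?thesis by (simp add: E_def)
      next
        case False
        obtain e where e: "E = ennreal e" "e \<ge> 0" using False by (cases E) auto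
        have nn: "0 \<le> exp d" "0 \<le> max 0 (-d)" "0 \<le> max 0 d" "0 \<le> s * P" "0 \<le> s * N" "0 \<le> m"
          using s P N m0 by auto
        have "ennreal (exp d * (m + s * P + max 0 (-d) * m)) \<le> ennreal (e + exp d * (s * N + max 0 d * m))"
          using ineq nn s P N m0 e by (simp add: ennreal_mult ennreal_plus)
        then have r: "exp d * (m + s * P + max 0 (-d) * m) \<le> e + exp d * (s * N + max 0 d * m)"
          using nn e by (subst (asm) ennreal_le_iff) (auto intro!: add_nonneg_nonneg mult_nonneg_nonneg)
        have "s * P - s * N = d * m" using m0 by (simp add: d_def c_def right_diff_distrib[symmetric])
        moreover have "max 0 (-d) * m - max 0 d * m = -d * m" by (simp add: max_def)
        moreover have "exp d * (m + s * P + max 0 (-d) * m) - exp d * (s * N + max 0 d * m) = exp d * (m + (s * P - s * N) + (max 0 (-d) * m - max 0 d * m))"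
          by (simp add: algebra_simps)
        ultimately have "exp d * (m + s * P + max 0 (-d) * m) - exp d * (s * N + max 0 d * m) = exp d * m"
          by simp
        then have "exp d * m \<le> e" using r by linarith
        then show ?thesis using ep e nn by (simp add: E_def[symmetric] m_def[symmetric] ennreal_mult[symmetric] del: ennreal_mult')
      qed
    qed
  qed
qed

lemma ennpow_mono: "x \<le> y \<Longrightarrow> q > 0 \<Longrightarrow> ennpow x q \<le> ennpow y q"
proof -
  assume xy: "x \<le> y" and q: "q > 0"
  show ?thesis
  proof (cases "y = \<infinity>")
    case True then show ?thesis by (simp add: ennpow_def)
  next
    case False
    then have "x \<noteq> \<infinity>" using xy by (auto simp: top_unique)
    then have "enn2real x \<le> enn2real y" using xy False by (intro enn2real_mono) (auto simp: top.not_eq_extremum)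
    then have "enn2real x powr q \<le> enn2real y powr q" using q by (intro powr_mono2) auto
    then show ?thesis using False \<open>x \<noteq> \<infinity>\<close> by (simp add: ennpow_def)
  qed
qed

lemma ennpow_cmult:
  assumes C: "C > 0" and q: "q > 0"
  shows "ennpow (ennreal C * y) q = ennreal (C powr q) * ennpow y q"
proof (cases "y = \<infinity>")
  case True then show ?thesis using C by (simp add: ennpow_def ennreal_mult_top)
next
  case False
  then obtain r where r: "y = ennreal r" "r \<ge> 0" by (cases y) auto
  then show ?thesis using C by (simp add: ennpow_def ennreal_mult[symmetric] powr_mult del: ennreal_mult')
qed

lemma ennpow_double:
  assumes s: "s > 0"
  shows "ennpow x (2 * s) = (ennpow x s)\<^sup>2"
proof (cases "x = \<infinity>")
  case True then show ?thesis by (simp add: ennpow_def)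
next
  case False
  have "enn2real x powr (2 * s) = (enn2real x powr s)\<^sup>2"
    by (simp add: power2_eq_square powr_add[symmetric])
  then show ?thesis using False by (simp add: ennpow_def ennreal_power)
qed

lemma ennpow_Sup_le:
  assumes s: "s > 0" and X: "\<And>x. x \<in> X \<Longrightarrow> ennpow x s \<le> c"
  shows "ennpow (Sup X) s \<le> c"
proof (cases "c = \<infinity>")
  case True then show ?thesis by simp
next
  case False
  then obtain r where r: "c = ennreal r" "r \<ge> 0" by (cases c) auto
  define b where "b = ennreal (r powr (1/s))"
  have "x \<le> b" if "x \<in> X" for x
  proof (cases "x = \<infinity>")
    case True then show ?thesis using X[OF that] r by (simp add: ennpow_def top_unique)
  next
    case False
    then obtain t where t: "x = ennreal t" "t \<ge> 0" by (cases x) auto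
    then have "t powr s \<le> r" using X[OF that] r by (simp add: ennpow_def)
    then have "(t powr s) powr (1/s) \<le> r powr (1/s)" using t s by (intro powr_mono2) auto
    then have "t \<le> r powr (1/s)" using t s by (simp add: powr_powr)
    then show ?thesis using t by (simp add: b_def)
  qed
  then have "Sup X \<le> b" by (rule Sup_least)
  then have "ennpow (Sup X) s \<le> ennpow b s" using s by (rule ennpow_mono)
  also have "ennpow b s = c" using r s by (simp add: b_def ennpow_def powr_powr)
  finally show ?thesis .
qed

lemma wint_cong_H: "(\<And>w. w \<in> Hplane \<Longrightarrow> g1 w = g2 w) \<Longrightarrow> wint \<alpha> S g1 = wint \<alpha> S g2"
  unfolding wint_def by (intro nn_integral_cong) (auto split: split_indicator)

lemma Top_meas[measurable]:
  assumes [measurable]: "h \<in> borel_measurable borel"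
  shows "Top \<alpha> h \<in> borel_measurable borel"
proof -
  have "(\<lambda>z. \<integral>\<^sup>+w. ennreal (Kf \<alpha> z w) * h w * ennreal (Im w powr \<alpha>) * indicator Hplane w \<partial>lborel) \<in> borel_measurable lborel"
    by measurable
  then show ?thesis unfolding Top_def by simp
qed

lemma Mexp_pointwise:
  fixes f :: "complex \<Rightarrow> complex" and \<alpha> s :: real and z :: complex
  assumes f[measurable]: "f \<in> borel_measurable borel" and s: "s > 0" and \<alpha>: "\<alpha> > -1"
  shows "ennpow (Mexp \<alpha> f z) s \<le> ennreal (\<alpha>+1) * Top \<alpha> (\<lambda>w. ennreal (norm (f w) powr s)) z"
  unfolding Mexp_def
proof (rule ennpow_Sup_le[OF s])
  fix x assume "x \<in> expavg \<alpha> f ` {I. is_interval I \<and> bounded I \<and> z \<in> Qbox I}"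
  then obtain I where I: "is_interval I" "bounded I" "z \<in> Qbox I" and x: "x = expavg \<alpha> f I" by auto
  note F = Qbox_facts[OF I \<alpha>]
  define L where "L = ilen I"
  define m where "m = L powr (\<alpha>+2) / (\<alpha>+1)"
  have L0: "L > 0" using F(1) by (simp add: L_def)
  have m0: "m > 0" using L0 \<alpha> by (simp add: m_def)
  have "ennpow x s * ennreal m \<le> wint \<alpha> (Qbox I) (\<lambda>w. ennreal (norm (f w) powr s))"
    using jensen_box[OF f s I \<alpha>] F(6) by (simp add: x m_def L_def)
  also have "\<dots> \<le> ennreal (L powr (\<alpha>+2)) * Top \<alpha> (\<lambda>w. ennreal (norm (f w) powr s)) z"
    unfolding L_def by (rule wint_le_Top[OF I \<alpha>]) measurable
  also have "ennreal (L powr (\<alpha>+2)) = ennreal m * ennreal (\<alpha>+1)"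
    using \<alpha> m0 by (simp add: m_def ennreal_mult[symmetric] del: ennreal_mult')
  finally have "ennreal m * ennpow x s \<le> ennreal m * (ennreal (\<alpha>+1) * Top \<alpha> (\<lambda>w. ennreal (norm (f w) powr s)) z)"
    by (simp add: mult_ac)
  then show "ennpow x s \<le> ennreal (\<alpha>+1) * Top \<alpha> (\<lambda>w. ennreal (norm (f w) powr s)) z"
    using m0 by (subst (asm) ennreal_mult_le_mult_iff) auto
qed

lemma main_meas:
  fixes f :: "complex \<Rightarrow> complex" and p \<alpha> :: real
  assumes f[measurable]: "f \<in> borel_measurable borel" and p: "p > 0" and \<alpha>: "\<alpha> > -1"
  shows "wnorm p \<alpha> (Mexp \<alpha> f) \<le> ennreal ((((\<alpha>+1) * Ck \<alpha>)\<^sup>2) powr (1 / p)) * wnorm p \<alpha> (\<lambda>z. ennreal (norm (f z)))"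
proof -
  define s where "s = p / 2"
  have s: "s > 0" using p by (simp add: s_def)
  define h where "h w = ennreal (norm (f w) powr s)" for w
  have [measurable]: "h \<in> borel_measurable borel" unfolding h_def by measurable
  define C where "C = ((\<alpha>+1) * Ck \<alpha>)\<^sup>2"
  have C0: "C > 0" using Ck_pos[OF \<alpha>] \<alpha> by (simp add: C_def)
  define X where "X = wint \<alpha> UNIV (\<lambda>z. ennpow (Mexp \<alpha> f z) p)"
  define Y where "Y = wint \<alpha> UNIV (\<lambda>z. ennpow (ennreal (norm (f z))) p)"
  have "X \<le> wint \<alpha> UNIV (\<lambda>z. ennreal ((\<alpha>+1)\<^sup>2) * (Top \<alpha> h z)\<^sup>2)"
    unfolding X_def
  proof (rule wint_mono)
    fix z
    have "ennpow (Mexp \<alpha> f z) p = (ennpow (Mexp \<alpha> f z) s)\<^sup>2"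
      using ennpow_double[OF s] by (simp add: s_def)
    also have "\<dots> \<le> (ennreal (\<alpha>+1) * Top \<alpha> h z)\<^sup>2"
      unfolding h_def by (intro power_mono Mexp_pointwise[OF f s \<alpha>]) auto
    also have "\<dots> = ennreal ((\<alpha>+1)\<^sup>2) * (Top \<alpha> h z)\<^sup>2"
      using \<alpha> by (simp add: power_mult_distrib ennreal_power)
    finally show "ennpow (Mexp \<alpha> f z) p \<le> ennreal ((\<alpha>+1)\<^sup>2) * (Top \<alpha> h z)\<^sup>2" .
  qed
  also have "\<dots> = ennreal ((\<alpha>+1)\<^sup>2) * wint \<alpha> UNIV (\<lambda>z. (Top \<alpha> h z)\<^sup>2)"
    by (rule wint_cmult) measurable
  also have "wint \<alpha> UNIV (\<lambda>z. (Top \<alpha> h z)\<^sup>2) \<le> ennreal ((Ck \<alpha>)\<^sup>2) * (\<integral>\<^sup>+w. (h w)\<^sup>2 * ennreal (Im w powr \<alpha>) * indicator Hplane w \<partial>lborel)"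
    unfolding wint_def using schur[OF \<alpha>, of h] by simp
  also have "(\<integral>\<^sup>+w. (h w)\<^sup>2 * ennreal (Im w powr \<alpha>) * indicator Hplane w \<partial>lborel) = Y"
    unfolding Y_def wint_def
  proof (intro nn_integral_cong)
    fix w
    have "(h w)\<^sup>2 = ennpow (ennreal (norm (f w))) p"
    proof -
      have "norm (f w) powr s * norm (f w) powr s = norm (f w) powr p"
        by (simp add: powr_add[symmetric] s_def)
      then show ?thesis
        by (simp add: h_def ennpow_def power2_eq_square ennreal_mult[symmetric] del: ennreal_mult')
    qed
    then show "(h w)\<^sup>2 * ennreal (Im w powr \<alpha>) * indicator Hplane w = ennpow (ennreal (norm (f w))) p * ennreal (Im w powr \<alpha>) * indicator (UNIV \<inter> Hplane) w"
      by simp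
  qed
  finally have XY: "X \<le> ennreal C * Y"
    using \<alpha> by (simp add: C_def power_mult_distrib ennreal_mult mult.assoc mult_left_mono)
  have "wnorm p \<alpha> (Mexp \<alpha> f) = ennpow X (1/p)" by (simp add: wnorm_def X_def)
  also have "\<dots> \<le> ennpow (ennreal C * Y) (1/p)" using XY p by (intro ennpow_mono) auto
  also have "\<dots> = ennreal (C powr (1/p)) * ennpow Y (1/p)" using C0 p by (intro ennpow_cmult) auto
  also have "ennpow Y (1/p) = wnorm p \<alpha> (\<lambda>z. ennreal (norm (f z)))" by (simp add: wnorm_def Y_def)
  finally show ?thesis by (simp add: C_def)
qed

theorem lemma4p12:
  fixes p \<alpha> :: real
  assumes "0 < p" and "\<alpha> > -1"
  shows "\<exists>C::real. C > 0 \<and>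
    (\<forall>f :: complex \<Rightarrow> complex. set_borel_measurable lborel Hplane f \<longrightarrow>
       wnorm p \<alpha> (Mexp \<alpha> f) \<le> ennreal (C powr (1 / p)) * wnorm p \<alpha> (\<lambda>z. ennreal (norm (f z))))"
proof (intro exI conjI allI impI)
  show "((\<alpha>+1) * Ck \<alpha>)\<^sup>2 > 0" using Ck_pos[OF assms(2)] assms(2) by simp
  fix f :: "complex \<Rightarrow> complex"
  assume sm: "set_borel_measurable lborel Hplane f"
  define g where "g z = indicator Hplane z *\<^sub>R f z" for z
  have g[measurable]: "g \<in> borel_measurable borel"
    using sm unfolding set_borel_measurable_def g_def by simp
  have fg: "w \<in> Hplane \<Longrightarrow> g w = f w" for w by (simp add: g_def)
  have "Mexp \<alpha> f = Mexp \<alpha> g"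
    unfolding Mexp_def expavg_def
    by (intro ext SUP_cong refl arg_cong2[where f=Let] ext, simp_all add: fg cong: wint_cong_H)
  moreover have "wnorm p \<alpha> (\<lambda>z. ennreal (norm (f z))) = wnorm p \<alpha> (\<lambda>z. ennreal (norm (g z)))"
    unfolding wnorm_def by (simp add: fg cong: wint_cong_H)
  ultimately show "wnorm p \<alpha> (Mexp \<alpha> f) \<le> ennreal ((((\<alpha>+1) * Ck \<alpha>)\<^sup>2) powr (1 / p)) * wnorm p \<alpha> (\<lambda>z. ennreal (norm (f z)))"
    using main_meas[OF g assms] by simp
qed


end
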